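(* Let $\mathcal{M}=(E,\mathcal{C}^* )$ be a uniform oriented matroid of rank $r\ge 2$ and let $T$ be a tope of $\mathcal{M}$. Let $\mathcal{C}_T=\{X\in\mathcal{C}^*: X< T\}$ and $\mathcal{A}=\{X^0: X\in\mathcal{C}_T\}$. Then $\mathcal{A}$ is a $d$-dimensional abstract polytope on the ground set $E$, where $d=r-1$. Moreover, the graph $G(T)$ of $T$ is isomorphic to the graph $G_{abs}(\mathcal{A})$ of $\mathcal{A}$ (via $X\mapsto X^0$).
   Context: Sign vectors: for a finite set $E$ and $X\in\{+,-,0\}^E$, write $X^+=\{e:X_e=+\}$, $X^-=\{e:X_e=-\}$, $X^0=\{e:X_e=0\}$, $\operatorname{supp}(X)=X^+\cup X^-$, and $-X$ for the componentwise negation. For sign vectors $X,Y$, the separating set is $S(X,Y)=(X^+\cap Y^-)\cup(X^-\cap Y^+)$, and the composition $X\circ Y$ is given by $(X\circ Y)_e=X_e$ if $X_e\neq 0$ and $(X\circ Y)_e=Y_e$ otherwise. An oriented matroid $\mathcal{M}=(E,\mathcal{C}^* )$ is a finite set $E$ together with a set $\mathcal{C}^*\subseteq\{+,-,0\}^E$ of (signed) cocircuits satisfying: (CC0) $\mathbf{0}\notin\mathcal{C}^*$; (CC1) $X\in\mathcal{C}^*\Rightarrow -X\in\mathcal{C}^*$; (CC2) if $X,Y\in\mathcal{C}^*$ and $\operatorname{supp}(X)\subseteq\operatorname{supp}(Y)$ then $X=\pm Y$; (CC3) if $X,Y\in\mathcal{C}^*$, $X\neq -Y$ and $e\in S(X,Y)$,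 then there is $Z\in\mathcal{C}^*$ with $Z^+\subseteq (X^+\cup Y^+)\setminus\{e\}$ and $Z^-\subseteq (X^-\cup Y^-)\setminus\{e\}$. The covectors of $\mathcal{M}$ are $\mathbf{0}$ together with all compositions $X^1\circ\cdots\circ X^k$ ($k\ge 1$) of cocircuits, partially ordered componentwise by $0<+$ and $0<-$ ($+,-$ incomparable); $X<T$ refers to this order. The rank $r$ of $\mathcal{M}$ is the largest $k$ such that there is a chain $\mathbf{0}=V_0<V_1<\cdots<V_k$ of covectors. $\mathcal{M}$ is uniform if $|X^0|=r-1$ for every cocircuit $X$. A tope is a covector that is maximal in this order. The cocircuit graph $G^*(\mathcal{M})$ has the cocircuits as vertices, with distinct cocircuits $X,Y$ adjacent iff $|X^0\cap Y^0|\ge r-2$ and $S(X,Y)=\emptyset$. The graph $G(T)$ of a tope $T$ is the subgraph of $G^*(\mathcal{M})$ induced by the cocircuits $X$ with $X<T$. Abstract polytope: for a finite set $T_0$, a family $\mathcal{A}$ of subsets of $T_0$ (called vertices) is a $d$-dimensional abstract polytope on ground set $T_0$ if (i) every vertex has cardinality $d$; (ii) every $(d-1)$-element subset of $T_0$ is contained in either no vertex or exactly two vertices (these two are called adjacent); (iii) for any two distinct vertices $X,Y\in\mathcal{A}$ there is a sequence $X=Z_0,Z_1,\dots,Z_k=Y$ of vertices with $Z_i,Z_{i+1}$ adjacent for all $i$ and $X\cap Y\subseteq Z_i$ for all $i$. The graph $G_{abs}(\mathcal{A})$ has vertex set $\mathcal{A}$ and edges between adjacent vertices as in (ii). *)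

theory Defs
  imports Main
begin

datatype sign = Pos | Neg | Zero

type_synonym 'e svec = "'e \<Rightarrow> sign"

definition signvecs :: "'e set \<Rightarrow> 'e svec set" where
  "signvecs E = {X. \<forall>e. e \<notin> E \<longrightarrow> X e = Zero}"

definition zerovec :: "'e svec" where "zerovec = (\<lambda>e. Zero)"

definition pos_part :: "'e svec \<Rightarrow> 'e set" where "pos_part X = {e. X e = Pos}"
definition neg_part :: "'e svec \<Rightarrow> 'e set" where "neg_part X = {e. X e = Neg}"
definition zero_part :: "'e set \<Rightarrow> 'e svec \<Rightarrow> 'e set" where
  "zero_part E X = {e \<in> E. X e = Zero}"
definition supp :: "'e svec \<Rightarrow> 'e set" where "supp X = pos_part X \<union> neg_part X"

fun sneg :: "sign \<Rightarrow> sign" where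
  "sneg Pos = Neg" | "sneg Neg = Pos" | "sneg Zero = Zero"

definition negv :: "'e svec \<Rightarrow> 'e svec" where "negv X = (\<lambda>e. sneg (X e))"

definition sep :: "'e svec \<Rightarrow> 'e svec \<Rightarrow> 'e set" where
  "sep X Y = (pos_part X \<inter> neg_part Y) \<union> (neg_part X \<inter> pos_part Y)"

definition comp :: "'e svec \<Rightarrow> 'e svec \<Rightarrow> 'e svec" where
  "comp X Y = (\<lambda>e. if X e \<noteq> Zero then X e else Y e)"

definition oriented_matroid :: "'e set \<Rightarrow> 'e svec set \<Rightarrow> bool" where
  "oriented_matroid E C \<longleftrightarrow> finite E \<and> C \<subseteq> signvecs E
    \<and> zerovec \<notin> C
    \<and> (\<forall>X\<in>C. negv X \<in> C)
    \<and> (\<forall>X\<in>C. \<forall>Y\<in>C. supp X \<subseteq> supp Y \<longrightarrow> X = Y \<or> X = negv Y)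
    \<and> (\<forall>X\<in>C. \<forall>Y\<in>C. \<forall>e. X \<noteq> negv Y \<and> e \<in> sep X Y \<longrightarrow>
         (\<exists>Z\<in>C. pos_part Z \<subseteq> (pos_part X \<union> pos_part Y) - {e}
                \<and> neg_part Z \<subseteq> (neg_part X \<union> neg_part Y) - {e}))"

text \<open>Nonzero covectors: compositions X1 o ... o Xk (k >= 1) of cocircuits.\<close>
inductive_set compositions :: "'e svec set \<Rightarrow> 'e svec set" for C where
  base: "X \<in> C \<Longrightarrow> X \<in> compositions C"
| step: "X \<in> C \<Longrightarrow> Y \<in> compositions C \<Longrightarrow> comp X Y \<in> compositions C"

definition covectors :: "'e svec set \<Rightarrow> 'e svec set" where
  "covectors C = insert zerovec (compositions C)"

definition sle :: "'e svec \<Rightarrow> 'e svec \<Rightarrow> bool" where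
  "sle X Y \<longleftrightarrow> (\<forall>e. X e = Zero \<or> X e = Y e)"

definition sless :: "'e svec \<Rightarrow> 'e svec \<Rightarrow> bool" where
  "sless X Y \<longleftrightarrow> sle X Y \<and> X \<noteq> Y"

definition om_rank :: "'e svec set \<Rightarrow> nat" where
  "om_rank C = (GREATEST k. \<exists>V :: nat \<Rightarrow> 'e svec. V 0 = zerovec
      \<and> (\<forall>i\<le>k. V i \<in> covectors C) \<and> (\<forall>i<k. sless (V i) (V (Suc i))))"

definition uniform_om :: "'e set \<Rightarrow> 'e svec set \<Rightarrow> bool" where
  "uniform_om E C \<longleftrightarrow> (\<forall>X\<in>C. card (zero_part E X) = om_rank C - 1)"

definition is_tope :: "'e svec set \<Rightarrow> 'e svec \<Rightarrow> bool" where
  "is_tope C T \<longleftrightarrow> T \<in> covectors C \<and> \<not> (\<exists>Y\<in>covectors C. sless T Y)"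

definition cocirc_adj :: "'e set \<Rightarrow> 'e svec set \<Rightarrow> 'e svec \<Rightarrow> 'e svec \<Rightarrow> bool" where
  "cocirc_adj E C X Y \<longleftrightarrow> X \<in> C \<and> Y \<in> C \<and> X \<noteq> Y
     \<and> card (zero_part E X \<inter> zero_part E Y) \<ge> om_rank C - 2
     \<and> sep X Y = {}"

definition tope_cocircuits :: "'e svec set \<Rightarrow> 'e svec \<Rightarrow> 'e svec set" where
  "tope_cocircuits C T = {X \<in> C. sless X T}"

definition abs_adj :: "'e set \<Rightarrow> 'e set set \<Rightarrow> nat \<Rightarrow> 'e set \<Rightarrow> 'e set \<Rightarrow> bool" where
  "abs_adj T0 A d V W \<longleftrightarrow> V \<in> A \<and> W \<in> A \<and> V \<noteq> W
     \<and> (\<exists>F. F \<subseteq> T0 \<and> card F = d - 1 \<and> F \<subseteq> V \<and> F \<subseteq> W)"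

definition abstract_polytope :: "'e set \<Rightarrow> 'e set set \<Rightarrow> nat \<Rightarrow> bool" where
  "abstract_polytope T0 A d \<longleftrightarrow> finite T0 \<and> A \<subseteq> Pow T0
    \<and> (\<forall>V\<in>A. card V = d)
    \<and> (\<forall>F. F \<subseteq> T0 \<and> card F = d - 1 \<longrightarrow>
          card {V\<in>A. F \<subseteq> V} = 0 \<or> card {V\<in>A. F \<subseteq> V} = 2)
    \<and> (\<forall>X\<in>A. \<forall>Y\<in>A. X \<noteq> Y \<longrightarrow>
          (\<exists>(Z :: nat \<Rightarrow> 'e set) k. Z 0 = X \<and> Z k = Y
             \<and> (\<forall>i\<le>k. Z i \<in> A \<and> X \<inter> Y \<subseteq> Z i)
             \<and> (\<forall>i<k. abs_adj T0 A d (Z i) (Z (Suc i)))))"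

end

theory Submission
  imports Defs
begin


lemma sign_nz: "s \<noteq> Zero \<longleftrightarrow> s = Pos \<or> s = Neg" by (cases s) auto
lemma sneg_sneg[simp]: "sneg (sneg s) = s" by (cases s) auto
lemma sneg_Zero_iff[simp]: "sneg s = Zero \<longleftrightarrow> s = Zero" by (cases s) auto
lemma sneg_neq: "s \<noteq> Zero \<Longrightarrow> sneg s \<noteq> s" by (cases s) auto
lemma negv_negv[simp]: "negv (negv X) = X" by (simp add: negv_def)
lemma negv_app[simp]: "negv X e = sneg (X e)" by (simp add: negv_def)
lemma zp_negv[simp]: "zero_part E (negv X) = zero_part E X" by (simp add: zero_part_def)
lemma zp_subset: "zero_part E X \<subseteq> E" by (auto simp: zero_part_def)
lemma zp_iff: "x \<in> zero_part E X \<longleftrightarrow> x \<in> E \<and> X x = Zero" by (simp add: zero_part_def)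
lemma sv_out: "X \<in> signvecs E \<Longrightarrow> x \<notin> E \<Longrightarrow> X x = Zero" by (simp add: signvecs_def)
lemma sv_nz: "X \<in> signvecs E \<Longrightarrow> X x \<noteq> Zero \<Longrightarrow> x \<in> E" by (auto simp: signvecs_def)
lemma supp_eq: "X \<in> signvecs E \<Longrightarrow> supp X = E - zero_part E X"
proof -
  assume a: "X \<in> signvecs E"
  have "x \<in> supp X \<longleftrightarrow> x \<in> E - zero_part E X" for x
    using sv_out[OF a, of x] by (cases "X x") (auto simp: supp_def pos_part_def neg_part_def zero_part_def)
  then show ?thesis by blast
qed
lemma sep_iff: "e \<in> sep X Y \<longleftrightarrow> X e \<noteq> Zero \<and> Y e = sneg (X e)"
  by (cases "X e"; cases "Y e") (simp_all add: sep_def pos_part_def neg_part_def)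
lemma comp_assoc: "comp (comp X Y) W = comp X (comp Y W)" by (simp add: comp_def fun_eq_iff)
lemma zp_comp: "zero_part E (comp X Y) = zero_part E X \<inter> zero_part E Y"
  by (auto simp: comp_def zero_part_def)
lemma zp_zerovec: "zero_part E zerovec = E" by (simp add: zero_part_def zerovec_def)
lemma sle_zp: "sle X Y \<Longrightarrow> zero_part E Y \<subseteq> zero_part E X"
  by (auto simp: sle_def zero_part_def)
lemma sless_zp: "sless X Y \<Longrightarrow> Y \<in> signvecs E \<Longrightarrow> zero_part E Y \<subset> zero_part E X"
proof -
  assume a: "sless X Y" "Y \<in> signvecs E"
  have "X \<noteq> Y" using a(1) by (simp add: sless_def)
  then obtain x where x: "X x \<noteq> Y x" by (meson ext)
  have sl: "sle X Y" using a(1) by (simp add: sless_def)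
  then have "X x = Zero \<or> X x = Y x" by (simp add: sle_def)
  with x have "X x = Zero" "Y x \<noteq> Zero" by auto
  with sv_nz[OF a(2)] have "x \<in> zero_part E X - zero_part E Y" by (simp add: zp_iff)
  with sle_zp[OF sl, of E] show ?thesis by blast
qed

locale UOM =
  fixes E :: "'e set" and C :: "'e svec set" and T :: "'e svec"
  assumes om: "oriented_matroid E C"
    and un: "uniform_om E C"
    and rk: "om_rank C \<ge> 2"
    and tp: "is_tope C T"
begin

abbreviation "d \<equiv> om_rank C - 1"
abbreviation zp where "zp X \<equiv> zero_part E X"

lemma finE: "finite E" using om by (simp add: oriented_matroid_def)
lemma C_sv: "X \<in> C \<Longrightarrow> X \<in> signvecs E" using om by (auto simp: oriented_matroid_def)
lemma C_nz: "X \<in> C \<Longrightarrow> X \<noteq> zerovec" using om by (auto simp: oriented_matroid_def)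
lemma C_neg: "X \<in> C \<Longrightarrow> negv X \<in> C" using om by (auto simp: oriented_matroid_def)
lemma C_supp: "X \<in> C \<Longrightarrow> Y \<in> C \<Longrightarrow> supp X \<subseteq> supp Y \<Longrightarrow> X = Y \<or> X = negv Y"
  using om by (auto simp: oriented_matroid_def)
lemma C_elim: assumes "X \<in> C" "Y \<in> C" "X \<noteq> negv Y" "e \<in> sep X Y"
  shows "\<exists>W\<in>C. W e = Zero \<and> (\<forall>x. W x = Zero \<or> W x = X x \<or> W x = Y x)"
proof -
  have ax: "\<forall>X\<in>C. \<forall>Y\<in>C. \<forall>e. X \<noteq> negv Y \<and> e \<in> sep X Y \<longrightarrow>
         (\<exists>Z\<in>C. pos_part Z \<subseteq> (pos_part X \<union> pos_part Y) - {e}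
                \<and> neg_part Z \<subseteq> (neg_part X \<union> neg_part Y) - {e})"
    using om unfolding oriented_matroid_def by (elim conjE) assumption
  from ax assms obtain W where W: "W \<in> C" "pos_part W \<subseteq> (pos_part X \<union> pos_part Y) - {e}"
     "neg_part W \<subseteq> (neg_part X \<union> neg_part Y) - {e}"
    by meson
  have 1: "W e = Zero" using W(2,3) by (cases "W e") (auto simp: pos_part_def neg_part_def)
  have 2: "\<forall>x. W x = Zero \<or> W x = X x \<or> W x = Y x"
  proof
    fix x show "W x = Zero \<or> W x = X x \<or> W x = Y x"
    using W(2,3) by (cases "W x") (auto simp: pos_part_def neg_part_def)
  qed
  show ?thesis using W(1) 1 2 by (intro bexI[of _ W]) simp_all
qed
lemma card_zp: "X \<in> C \<Longrightarrow> card (zp X) = d" using un by (simp add: uniform_om_def)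
lemma d_pos: "d \<ge> 1" using rk by simp

lemma zp_eq_C: "X \<in> C \<Longrightarrow> Y \<in> C \<Longrightarrow> zp X = zp Y \<Longrightarrow> X = Y \<or> X = negv Y"
proof -
  assume a: "X \<in> C" "Y \<in> C" "zp X = zp Y"
  then have "supp X = supp Y" using C_sv supp_eq by metis
  then show ?thesis using C_supp a by blast
qed

lemma comp_sv: "V \<in> compositions C \<Longrightarrow> V \<in> signvecs E"
proof (induction rule: compositions.induct)
  case (base X) then show ?case by (simp add: C_sv)
next
  case (step X Y) then show ?case using C_sv[of X] by (auto simp: signvecs_def comp_def)
qed
lemma cov_sv: "V \<in> covectors C \<Longrightarrow> V \<in> signvecs E"
  using comp_sv by (auto simp: covectors_def signvecs_def zerovec_def)
lemma comp_comp: "V \<in> compositions C \<Longrightarrow> W \<in> compositions C \<Longrightarrow> comp V W \<in> compositions C"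
  by (induction rule: compositions.induct) (auto simp: comp_assoc intro: compositions.intros)

lemma comp_flat: "V \<in> compositions C \<Longrightarrow> (\<exists>X\<in>C. zp V \<subseteq> zp X) \<and>
   (\<forall>a\<in>E. a \<notin> zp V \<longrightarrow> (\<exists>X\<in>C. zp V \<subseteq> zp X \<and> a \<notin> zp X))"
proof (induction rule: compositions.induct)
  case (base X) then show ?case by blast
next
  case (step X Y)
  show ?case unfolding zp_comp
  proof
    show "\<exists>Xa\<in>C. zp X \<inter> zp Y \<subseteq> zp Xa" using step(1) by blast
    show "\<forall>a\<in>E. a \<notin> zp X \<inter> zp Y \<longrightarrow> (\<exists>Xa\<in>C. zp X \<inter> zp Y \<subseteq> zp Xa \<and> a \<notin> zp Xa)"
    proof (intro ballI impI)
      fix a assume a: "a \<in> E" "a \<notin> zp X \<inter> zp Y"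
      show "\<exists>Xa\<in>C. zp X \<inter> zp Y \<subseteq> zp Xa \<and> a \<notin> zp Xa"
      proof (cases "a \<in> zp X")
        case False then show ?thesis using step(1) by blast
      next
        case True
        then have "a \<notin> zp Y" using a by blast
        then obtain Z where "Z \<in> C" "zp Y \<subseteq> zp Z" "a \<notin> zp Z" using step(3) a(1) by blast
        then show ?thesis by blast
      qed
    qed
  qed
qed

end


context UOM begin

definition chainP :: "nat \<Rightarrow> (nat \<Rightarrow> 'e svec) \<Rightarrow> bool" where
 "chainP k V \<longleftrightarrow> V 0 = zerovec \<and> (\<forall>i\<le>k. V i \<in> covectors C) \<and> (\<forall>i<k. sless (V i) (V (Suc i)))"

lemma chain_step: assumes "chainP k V" "i < k" shows "zp (V (Suc i)) \<subset> zp (V i)"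
proof -
  have "sless (V i) (V (Suc i))" using assms by (simp add: chainP_def)
  moreover have "V (Suc i) \<in> signvecs E" using assms cov_sv by (simp add: chainP_def)
  ultimately show ?thesis by (rule sless_zp)
qed

lemma fin_zp: "finite (zp X)" using finE zp_subset finite_subset by metis

lemma chain_step_card: assumes "chainP k V" "i < k" shows "card (zp (V (Suc i))) < card (zp (V i))"
  using chain_step[OF assms] fin_zp by (simp add: psubset_card_mono)

lemma chain_card: assumes "chainP k V" "i \<le> k" shows "card (zp (V i)) + i \<le> card E"
  using assms(2)
proof (induction i)
  case 0 then show ?case using assms(1) by (simp add: chainP_def zp_zerovec)
next
  case (Suc i)
  have "card (zp (V (Suc i))) < card (zp (V i))" using chain_step_card assms(1) Suc.prems by simp
  with Suc show ?case by simp
qed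

lemma chain_bound: "chainP k V \<Longrightarrow> k \<le> card E" using chain_card[of k V k] by simp

lemma rank_chain: "\<exists>V. chainP (om_rank C) V"
proof -
  have P0: "\<exists>V. chainP 0 V" by (rule exI[of _ "\<lambda>_. zerovec"]) (simp add: chainP_def covectors_def)
  have "(\<lambda>k. \<exists>V. chainP k V) (Greatest (\<lambda>k. \<exists>V. chainP k V))"
    by (rule GreatestI_nat[of _ 0 "card E"]) (use P0 chain_bound in auto)
  then show ?thesis unfolding om_rank_def chainP_def by simp
qed

lemma chain_comp: assumes "chainP k V" "1 \<le> i" "i \<le> k" shows "V i \<in> compositions C"
proof -
  have "card (zp (V i)) + i \<le> card E" by (rule chain_card[OF assms(1,3)])
  then have "zp (V i) \<noteq> E" using assms(2) by auto
  then have "V i \<noteq> zerovec" using zp_zerovec by metis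
  moreover have "V i \<in> covectors C" using assms by (simp add: chainP_def)
  ultimately show ?thesis by (simp add: covectors_def)
qed

lemma chain_upper: assumes "chainP k V" "1 \<le> i" "i \<le> k" shows "card (zp (V i)) + i \<le> d + 1"
  using assms(2,3)
proof (induction i rule: nat_induct_at_least)
  case base
  obtain X where "X \<in> C" "zp (V 1) \<subseteq> zp X" using comp_flat chain_comp[OF assms(1) order_refl base] by blast
  then have "card (zp (V 1)) \<le> d" using card_zp fin_zp card_mono by metis
  then show ?case by simp
next
  case (Suc n)
  have "card (zp (V (Suc n))) < card (zp (V n))" using chain_step_card assms(1) Suc by simp
  with Suc show ?case by simp
qed

lemma chain_lower: assumes "chainP k V" "j \<le> k" shows "j \<le> card (zp (V (k - j)))"
  using assms(2)
proof (induction j)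
  case 0 then show ?case by simp
next
  case (Suc j)
  have "k - Suc j < k" using Suc.prems by simp
  then have "card (zp (V (Suc (k - Suc j)))) < card (zp (V (k - Suc j)))" using chain_step_card assms(1) by blast
  moreover have "Suc (k - Suc j) = k - j" using Suc.prems by simp
  ultimately show ?case using Suc by simp
qed

definition allhyp :: "'e set \<Rightarrow> bool" where
  "allhyp K \<longleftrightarrow> (\<forall>S. S \<subseteq> E \<longrightarrow> K \<subseteq> S \<longrightarrow> card S = d \<longrightarrow> S \<in> zp ` C)"

lemma sign_eq_cases: "a \<noteq> Zero \<Longrightarrow> b \<noteq> Zero \<Longrightarrow> b \<noteq> sneg a \<Longrightarrow> b = a"
  by (cases a; cases b) auto

lemma hyp_elim: assumes X: "X \<in> C" and Y: "Y \<in> C" and ne: "zp X \<noteq> zp Y" and s: "s \<in> E" "s \<notin> zp X" "s \<notin> zp Y"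
  shows "\<exists>W\<in>C. insert s (zp X \<inter> zp Y) \<subseteq> zp W"
proof -
  have Xs: "X s \<noteq> Zero" and Ys: "Y s \<noteq> Zero" using s by (auto simp: zp_iff)
  show ?thesis
  proof (cases "Y s = sneg (X s)")
    case True
    then have "s \<in> sep X Y" using Xs by (simp add: sep_iff)
    moreover have "X \<noteq> negv Y" using ne by auto
    ultimately obtain W where W: "W \<in> C" "W s = Zero" "\<forall>x. W x = Zero \<or> W x = X x \<or> W x = Y x"
      using C_elim X Y by blast
    have "insert s (zp X \<inter> zp Y) \<subseteq> zp W"
    proof
      fix x assume "x \<in> insert s (zp X \<inter> zp Y)"
      then show "x \<in> zp W" using W s(1) by (auto simp: zp_iff)
    qed
    then show ?thesis using W(1) by blast
  next
    case False
    then have "Y s = X s" using sign_eq_cases Xs Ys by blast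
    then have "s \<in> sep X (negv Y)" using Xs by (simp add: sep_iff)
    moreover have "X \<noteq> negv (negv Y)" using ne by auto
    ultimately obtain W where W: "W \<in> C" "W s = Zero" "\<forall>x. W x = Zero \<or> W x = X x \<or> W x = negv Y x"
      using C_elim X C_neg[OF Y] by blast
    have "insert s (zp X \<inter> zp Y) \<subseteq> zp W"
    proof
      fix x assume "x \<in> insert s (zp X \<inter> zp Y)"
      then show "x \<in> zp W" using W s(1) by (auto simp: zp_iff)
    qed
    then show ?thesis using W(1) by blast
  qed
qed

end


context UOM begin

lemma card_diff_sym: "finite A \<Longrightarrow> finite B \<Longrightarrow> card A = card B \<Longrightarrow> card (A - B) = card (B - A)"
proof -
  assume f: "finite A" "finite B" "card A = card B"
  have "card (A - B) = card A - card (A \<inter> B)" using f by (simp add: card_Diff_subset_Int)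
  moreover have "card (B - A) = card B - card (B \<inter> A)" using f by (simp add: card_Diff_subset_Int)
  ultimately show ?thesis using f by (simp add: Int_commute)
qed

lemma step_hyp:
  assumes P: "allhyp (insert a K)" and aK: "a \<notin> K" and aE: "a \<in> E"
    and X: "X \<in> C" "K \<subseteq> zp X" "a \<notin> zp X"
  shows "allhyp K"
  unfolding allhyp_def
proof (intro allI impI)
  fix S assume S: "S \<subseteq> E" "K \<subseteq> S" "card S = d"
  have finS: "finite S" by (rule finite_subset[OF S(1) finE])
  show "S \<in> zp ` C"
  proof (cases "a \<in> S")
    case True
    then have "insert a K \<subseteq> S" using S(2) by blast
    then show ?thesis using P[unfolded allhyp_def, rule_format, OF S(1) _ S(3)] by blast
  next
    case aS: False
    have main: "\<forall>H. H \<in> C \<longrightarrow> K \<subseteq> zp H \<longrightarrow> a \<notin> zp H \<longrightarrow> card (S - zp H) = n \<longrightarrow> S \<in> zp ` C" for n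
    proof (induction n rule: less_induct)
      case (less n)
      show ?case
      proof (intro allI impI)
        fix H assume H: "H \<in> C" "K \<subseteq> zp H" "a \<notin> zp H" "card (S - zp H) = n"
        show "S \<in> zp ` C"
        proof (cases "S \<subseteq> zp H")
          case True
          then have "S = zp H" using card_subset_eq[OF fin_zp True] card_zp[OF H(1)] S(3) by simp
          then show ?thesis using H(1) by blast
        next
          case False
          then obtain s where s: "s \<in> S" "s \<notin> zp H" by blast
          have "card (zp H - S) = card (S - zp H)"
            using card_diff_sym[OF fin_zp finS] card_zp[OF H(1)] S(3) by simp
          moreover have "card (S - zp H) > 0"
          proof -
            have "S - zp H \<noteq> {}" using s by blast
            moreover have "finite (S - zp H)" using finS by simp
            ultimately show ?thesis by (simp add: card_gt_0_iff)
          qed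
          ultimately have "card (zp H - S) \<noteq> 0" by simp
          then have "zp H - S \<noteq> {}" by (metis card.empty)
          then obtain b0 where b0: "b0 \<in> zp H" "b0 \<notin> S" by blast
          define H2 where "H2 = insert a (zp H - {b0})"
          have cHb: "card (zp H - {b0}) = d - 1"
            using card_Diff_singleton[OF b0(1)] card_zp[OF H(1)] by simp
          have "card H2 = Suc (card (zp H - {b0}))" unfolding H2_def
            by (rule card_insert_disjoint) (use H(3) fin_zp in auto)
          then have cH2: "card H2 = d" using cHb d_pos by simp
          have "zp H \<subseteq> E" by (rule zp_subset)
          then have H2E: "H2 \<subseteq> E" unfolding H2_def using aE by auto
          have aKH2: "insert a K \<subseteq> H2" unfolding H2_def using H(2) b0 S(2) by auto
          have "H2 \<in> zp ` C" using P[unfolded allhyp_def, rule_format, OF H2E aKH2 cH2] .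
          then obtain Y where Y: "Y \<in> C" "zp Y = H2" by blast
          have neq: "zp H \<noteq> zp Y" using Y(2)[unfolded H2_def] H(3) by auto
          have sE: "s \<in> E" using s S(1) by blast
          have "s \<noteq> a" using s(1) aS by auto
          then have "s \<notin> zp Y" using Y(2)[unfolded H2_def] s(2) by auto
          then obtain W where W: "W \<in> C" "insert s (zp H \<inter> zp Y) \<subseteq> zp W"
            using hyp_elim[OF H(1) Y(1) neq sE s(2)] by blast
          have "zp H \<inter> zp Y = zp H - {b0}" using Y(2)[unfolded H2_def] H(3) by auto
          then have sub: "insert s (zp H - {b0}) \<subseteq> zp W" using W(2) by simp
          have "card (insert s (zp H - {b0})) = d"
          proof -
            have "card (insert s (zp H - {b0})) = Suc (card (zp H - {b0}))"
              by (rule card_insert_disjoint) (use s(2) fin_zp in auto)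
            then show ?thesis using cHb d_pos by simp
          qed
          then have zW: "zp W = insert s (zp H - {b0})"
            using card_subset_eq[OF fin_zp sub] card_zp[OF W(1)] by simp
          have "S - zp W \<subseteq> (S - zp H) - {s}" using zW b0(2) by blast
          moreover have "card ((S - zp H) - {s}) < card (S - zp H)"
          proof -
            have m: "s \<in> S - zp H" using s by blast
            have f: "finite (S - zp H)" using finS by simp
            show ?thesis by (rule card_Diff1_less[OF f m])
          qed
          ultimately have lt: "card (S - zp W) < n"
          proof -
            assume a1: "S - zp W \<subseteq> (S - zp H) - {s}" and a2: "card ((S - zp H) - {s}) < card (S - zp H)"
            have "card (S - zp W) \<le> card ((S - zp H) - {s})"
              by (rule card_mono) (use finS a1 in auto)
            then show ?thesis using a2 H(4) by simp
          qed
          have KW: "K \<subseteq> zp W" using zW H(2) b0(2) S(2) by auto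
          have aW: "a \<notin> zp W" using zW H(3) \<open>s \<noteq> a\<close> by auto
          show ?thesis by (rule less.IH[OF lt, rule_format, OF W(1) KW aW refl])
        qed
      qed
    qed
    show ?thesis by (rule main[rule_format, OF X refl])
  qed
qed

lemma all_hyp: assumes "S \<subseteq> E" "card S = d" shows "S \<in> zp ` C"
proof -
  obtain V where V: "chainP (om_rank C) V" using rank_chain by blast
  have r: "om_rank C = d + 1" using rk by simp
  have sizes: "card (zp (V i)) = om_rank C - i" if "1 \<le> i" "i \<le> om_rank C" for i
  proof -
    have "card (zp (V i)) + i \<le> d + 1" by (rule chain_upper[OF V that])
    moreover have "om_rank C - i \<le> card (zp (V i))"
    proof -
      have e: "om_rank C - (om_rank C - i) = i" using that by simp
      show ?thesis using chain_lower[OF V, of "om_rank C - i"] unfolding e by simp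
    qed
    ultimately show ?thesis using that r by simp
  qed
  have "allhyp (zp (V i))" if "1 \<le> i" "i \<le> om_rank C" for i
    using that
  proof (induction i rule: nat_induct_at_least)
    case base
    obtain X where X: "X \<in> C" "zp (V 1) \<subseteq> zp X" using comp_flat chain_comp[OF V order_refl base] by blast
    have "card (zp (V 1)) = d" using sizes[of 1] base by simp
    then have eq: "zp (V 1) = zp X" using card_subset_eq[OF fin_zp X(2)] card_zp[OF X(1)] by simp
    show ?case unfolding allhyp_def
    proof (intro allI impI)
      fix S assume S: "S \<subseteq> E" "zp (V 1) \<subseteq> S" "card S = d"
      have "finite S" by (rule finite_subset[OF S(1) finE])
      then have "S = zp X" using card_subset_eq[of S "zp X"] S eq card_zp[OF X(1)] by simp
      then show "S \<in> zp ` C" using X(1) by blast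
    qed
  next
    case (Suc n)
    have lt: "n < om_rank C" using Suc by simp
    have ps: "zp (V (Suc n)) \<subset> zp (V n)" by (rule chain_step[OF V lt])
    have c1: "card (zp (V n)) = card (zp (V (Suc n))) + 1" using sizes[of n] sizes[of "Suc n"] Suc by simp
    obtain a where a: "a \<in> zp (V n)" "a \<notin> zp (V (Suc n))" using ps by blast
    have sub: "insert a (zp (V (Suc n))) \<subseteq> zp (V n)" using a ps by blast
    have "card (insert a (zp (V (Suc n)))) = card (zp (V n))" using c1 a(2) fin_zp by simp
    then have ins: "insert a (zp (V (Suc n))) = zp (V n)" using card_subset_eq[OF fin_zp sub] by simp
    have aE: "a \<in> E" using a(1) by (simp add: zp_iff)
    have "V (Suc n) \<in> compositions C" using chain_comp[OF V] Suc by simp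
    then obtain X where X: "X \<in> C" "zp (V (Suc n)) \<subseteq> zp X" "a \<notin> zp X" using comp_flat aE a(2) by blast
    show ?case by (rule step_hyp[OF _ a(2) aE X]) (use Suc ins in simp)
  qed
  then have "allhyp (zp (V (om_rank C)))" using rk by simp
  moreover have "zp (V (om_rank C)) = {}" using sizes[of "om_rank C"] rk fin_zp by simp
  ultimately show ?thesis using assms by (simp add: allhyp_def)
qed

lemma C_ne: "\<exists>X. X \<in> C"
proof -
  obtain V where V: "chainP (om_rank C) V" using rank_chain by blast
  have "V 1 \<in> compositions C" using chain_comp[OF V] rk by simp
  then show ?thesis using comp_flat by blast
qed

lemma E_big: "d + 1 \<le> card E"
proof -
  obtain X where X: "X \<in> C" using C_ne by blast
  have "X \<noteq> zerovec" using C_nz X by blast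
  then obtain x where x: "X x \<noteq> Zero" by (auto simp: zerovec_def fun_eq_iff)
  then have "x \<in> E - zp X" using sv_nz[OF C_sv[OF X] x] x by (auto simp: zp_iff)
  then have "zp X \<subset> E" using zp_subset[of E X] by auto
  then have "card (zp X) < card E" by (rule psubset_card_mono[OF finE])
  then show ?thesis using card_zp X by simp
qed

lemma T_cov: "T \<in> covectors C" using tp by (simp add: is_tope_def)
lemma T_sv: "T \<in> signvecs E" using cov_sv T_cov by blast

lemma T_full: assumes x: "x \<in> E" shows "T x \<noteq> Zero"
proof
  assume T0: "T x = Zero"
  have "d \<le> card (E - {x})" using E_big x finE by simp
  then obtain S where S: "S \<subseteq> E - {x}" "card S = d" by (meson obtain_subset_with_card_n)
  then obtain X where X: "X \<in> C" "zp X = S" using all_hyp by blast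
  have Xx: "X x \<noteq> Zero" using X S x by (auto simp: zp_iff)
  have cv: "comp T X \<in> covectors C"
  proof (cases "T = zerovec")
    case True
    then have "comp T X = X" by (simp add: comp_def zerovec_def)
    then show ?thesis using X(1) by (simp add: covectors_def compositions.base)
  next
    case False
    then have "T \<in> compositions C" using T_cov by (simp add: covectors_def)
    then show ?thesis using comp_comp compositions.base[OF X(1)] by (simp add: covectors_def)
  qed
  have "sle T (comp T X)" by (simp add: sle_def comp_def)
  moreover have "T \<noteq> comp T X"
  proof
    assume "T = comp T X"
    then have "T x = comp T X x" by simp
    also have "\<dots> = X x" using T0 by (simp add: comp_def)
    finally show False using T0 Xx by simp
  qed
  ultimately have "sless T (comp T X)" by (simp add: sless_def)
  then show False using tp cv by (auto simp: is_tope_def)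
qed

end


context UOM begin

definition vert :: "'e set \<Rightarrow> 'e svec \<Rightarrow> bool" where
 "vert R X \<longleftrightarrow> X \<in> C \<and> zp X \<subseteq> R \<and> (\<forall>x\<in>R. X x = Zero \<or> X x = T x)"

lemma sign3: "a \<noteq> Zero \<Longrightarrow> b \<noteq> Zero \<Longrightarrow> a \<noteq> b \<Longrightarrow> b = sneg a"
  by (cases a; cases b) auto

lemma TnzR: "R \<subseteq> E \<Longrightarrow> x \<in> R \<Longrightarrow> T x \<noteq> Zero" using T_full by auto

lemma vert_conf: assumes "vert R X" "x \<in> R" "x \<notin> zp X" "R \<subseteq> E" shows "X x = T x"
proof -
  have "x \<in> E" using assms by auto
  then have "X x \<noteq> Zero" using assms(3) by (simp add: zp_iff)
  then show ?thesis using assms(1,2) by (auto simp: vert_def)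
qed

lemma zp_sub_card: "X \<in> C \<Longrightarrow> A \<subseteq> zp X \<Longrightarrow> card A = d \<Longrightarrow> A = zp X"
  using card_subset_eq[OF fin_zp] card_zp by metis

lemma ins_form: assumes X: "X \<in> C" and F: "F \<subseteq> zp X" "card F = d - 1"
  shows "\<exists>f. f \<notin> F \<and> zp X = insert f F"
proof -
  have finF: "finite F" using F(1) fin_zp by (rule finite_subset)
  have "card F < card (zp X)" using F(2) card_zp[OF X] d_pos by simp
  then have "zp X - F \<noteq> {}" using F(1) by auto
  then obtain f where f: "f \<in> zp X" "f \<notin> F" by blast
  have "insert f F \<subseteq> zp X" using f F(1) by auto
  moreover have "card (insert f F) = d" using f(2) finF F(2) d_pos by simp
  ultimately have "insert f F = zp X" using zp_sub_card X by metis
  then show ?thesis using f(2) by metis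
qed

lemma vert_unique: assumes R: "R \<subseteq> E" and X: "vert R X" and Y: "vert R Y" and eq: "zp X = zp Y"
  and x: "x \<in> R" "x \<notin> zp X" shows "X = Y"
proof -
  have XC: "X \<in> C" and YC: "Y \<in> C" using X Y by (auto simp: vert_def)
  have "X = Y \<or> X = negv Y" by (rule zp_eq_C[OF XC YC eq])
  moreover have "X \<noteq> negv Y"
  proof
    assume n: "X = negv Y"
    have "X x = T x" by (rule vert_conf[OF X x R])
    moreover have "Y x = T x" using vert_conf[OF Y x(1) _ R] x(2) eq by simp
    ultimately have "T x = sneg (T x)" using n by simp
    then show False using sneg_neq TnzR[OF R x(1)] by metis
  qed
  ultimately show ?thesis by blast
qed

lemma EX: assumes R: "R \<subseteq> E" and X: "vert R X" and F: "F \<subseteq> zp X" "card F = d - 1"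
  and g: "g \<in> R" "g \<notin> zp X"
  shows "\<exists>Y. vert R Y \<and> F \<subseteq> zp Y \<and> zp Y \<noteq> zp X"
proof -
  have XC: "X \<in> C" using X by (simp add: vert_def)
  have XR: "zp X \<subseteq> R" using X by (simp add: vert_def)
  obtain f where f: "f \<notin> F" and zX: "zp X = insert f F" using ins_form[OF XC F] by blast
  have finF: "finite F" using F(1) fin_zp by (rule finite_subset)
  have fE: "f \<in> E" using zX zp_subset[of E X] by auto
  have Tf: "T f \<noteq> Zero" by (rule T_full[OF fE])
  have gF: "g \<notin> F" using g(2) F(1) by auto
  have gE: "g \<in> E" using g(1) R by auto
  have "insert g F \<subseteq> E" using gE F(1) zp_subset[of E X] by auto
  moreover have "card (insert g F) = d" using gF finF F(2) d_pos by simp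
  ultimately have "insert g F \<in> zp ` C" by (rule all_hyp)
  then obtain Y0 where Y0: "Y0 \<in> C" "zp Y0 = insert g F" by (metis imageE)
  have "f \<noteq> g" using g(2) zX by auto
  then have "f \<notin> zp Y0" using Y0(2) f by auto
  then have Y0f: "Y0 f \<noteq> Zero" using fE by (simp add: zp_iff)
  define Y1 where "Y1 = (if Y0 f = T f then Y0 else negv Y0)"
  have Y1C: "Y1 \<in> C" using Y0(1) C_neg by (simp add: Y1_def)
  have Y1z: "zp Y1 = insert g F" using Y0(2) by (simp add: Y1_def)
  have Y1f: "Y1 f = T f" using sign3[OF Y0f Tf] by (auto simp: Y1_def)
  define Q where "Q Y \<longleftrightarrow> Y \<in> C \<and> F \<subseteq> zp Y \<and> zp Y \<subseteq> R \<and> Y f = T f" for Y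
  define m where "m Y = card (sep Y T \<inter> R)" for Y
  have "Q Y1" unfolding Q_def using Y1C Y1z Y1f g(1) F(1) XR by auto
  have "\<exists>x. Q x \<and> (\<forall>y. Q y \<longrightarrow> m x \<le> m y)" by (rule ex_has_least_nat[of Q Y1 m]) fact
  then obtain Y where QY: "Q Y" and minY0: "\<forall>Y'. Q Y' \<longrightarrow> m Y \<le> m Y'" by (elim exE conjE)
  have minY: "m Y \<le> m Y'" if "Q Y'" for Y' using minY0 that by simp
  have YC: "Y \<in> C" and FY: "F \<subseteq> zp Y" and YR: "zp Y \<subseteq> R" and Yf: "Y f = T f"
    using QY by (auto simp: Q_def)
  have sepempty: "sep Y T \<inter> R = {}"
  proof (rule ccontr)
    assume "sep Y T \<inter> R \<noteq> {}"
    then obtain e where e: "e \<in> sep Y T" "e \<in> R" by blast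
    have Ye: "Y e \<noteq> Zero" and Te: "T e = sneg (Y e)" using e(1) by (auto simp: sep_iff)
    have eE: "e \<in> E" using e(2) R by auto
    have "e \<noteq> f"
    proof
      assume "e = f"
      then have "T f = sneg (T f)" using Te Yf by simp
      then show False using sneg_neq Tf by metis
    qed
    moreover have "e \<notin> F" using Ye FY eE by (auto simp: zp_iff)
    ultimately have eX: "e \<notin> zp X" using zX by auto
    have Xe: "X e = T e" by (rule vert_conf[OF X e(2) eX R])
    have Xe0: "X e \<noteq> Zero" using eX eE by (simp add: zp_iff)
    have "e \<in> sep X Y" using Xe Te Xe0 by (simp add: sep_iff)
    moreover have "X \<noteq> negv Y"
    proof
      assume "X = negv Y"
      then have "X f = sneg (T f)" using Yf by simp
      moreover have "X f = Zero" using zX fE by (auto simp: zp_iff)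
      ultimately show False using Tf by (metis sneg_Zero_iff)
    qed
    ultimately obtain W where W: "W \<in> C" "W e = Zero" "\<forall>x. W x = Zero \<or> W x = X x \<or> W x = Y x"
      using C_elim XC YC by blast
    have "insert e F \<subseteq> zp W"
    proof
      fix x assume x: "x \<in> insert e F"
      show "x \<in> zp W"
      proof (cases "x = e")
        case True then show ?thesis using W(2) eE by (simp add: zp_iff)
      next
        case False
        then have xF: "x \<in> F" using x by simp
        then have "X x = Zero" "Y x = Zero" "x \<in> E" using F(1) FY by (auto simp: zp_iff)
        then show ?thesis using W(3) by (auto simp: zp_iff)
      qed
    qed
    moreover have "card (insert e F) = d" using \<open>e \<notin> F\<close> finF F(2) d_pos by simp
    ultimately have zW: "zp W = insert e F" using zp_sub_card W(1) by metis
    have "f \<notin> zp W" using zW f \<open>e \<noteq> f\<close> by auto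
    then have "W f \<noteq> Zero" using fE by (simp add: zp_iff)
    moreover have "X f = Zero" using zX fE by (auto simp: zp_iff)
    ultimately have Wf: "W f = T f" using W(3) Yf by metis
    have "Q W" unfolding Q_def using W(1) zW Wf e(2) F(1) XR by auto
    then have le: "m Y \<le> m W" by (rule minY)
    have sub: "sep W T \<inter> R \<subseteq> (sep Y T \<inter> R) - {e}"
    proof
      fix x assume x: "x \<in> sep W T \<inter> R"
      then have Wx: "W x \<noteq> Zero" and Tx: "T x = sneg (W x)" and xR: "x \<in> R" by (auto simp: sep_iff)
      have "W x \<noteq> X x"
      proof
        assume WX: "W x = X x"
        then have "x \<notin> zp X" using Wx xR R by (auto simp: zp_iff)
        then have "X x = T x" using vert_conf[OF X xR _ R] by simp
        then have "T x = sneg (T x)" using Tx WX by simp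
        moreover have "T x \<noteq> Zero" using Tx Wx by simp
        ultimately show False using sneg_neq by metis
      qed
      then have "W x = Y x" using W(3) Wx by metis
      moreover have "x \<noteq> e" using Wx W(2) by auto
      ultimately show "x \<in> (sep Y T \<inter> R) - {e}" using Wx Tx xR by (simp add: sep_iff)
    qed
    have finR: "finite (sep Y T \<inter> R)" using finite_subset[OF R finE] by simp
    have "card (sep W T \<inter> R) \<le> card ((sep Y T \<inter> R) - {e})" by (rule card_mono) (use finR sub in auto)
    also have "\<dots> < card (sep Y T \<inter> R)" by (rule card_Diff1_less[OF finR]) (use e in auto)
    finally have "m W < m Y" by (simp add: m_def)
    then show False using le by simp
  qed
  have "vert R Y" unfolding vert_def
  proof (intro conjI ballI)
    show "Y \<in> C" by (rule YC)
    show "zp Y \<subseteq> R" by (rule YR)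
    fix x assume xR: "x \<in> R"
    show "Y x = Zero \<or> Y x = T x"
    proof (rule ccontr)
      assume "\<not> (Y x = Zero \<or> Y x = T x)"
      then have a: "Y x \<noteq> Zero" "Y x \<noteq> T x" by auto
      have "T x = sneg (Y x)" using sign3[OF a(1) TnzR[OF R xR]] a(2) by metis
      then have "x \<in> sep Y T \<inter> R" using a(1) xR by (simp add: sep_iff)
      then show False using sepempty by blast
    qed
  qed
  moreover have "zp Y \<noteq> zp X"
  proof
    assume "zp Y = zp X"
    then have "f \<in> zp Y" using zX by simp
    then have "Y f = Zero" by (simp add: zp_iff)
    then show False using Yf Tf by simp
  qed
  ultimately show ?thesis using FY by blast
qed

end


context UOM begin

lemma vert_C: "vert R X \<Longrightarrow> X \<in> C" by (simp add: vert_def)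
lemma vert_R: "vert R X \<Longrightarrow> zp X \<subseteq> R" by (simp add: vert_def)

lemma UQ: assumes R: "R \<subseteq> E" and X: "vert R X" and Y1: "vert R Y1" and Y2: "vert R Y2"
  and F: "F \<subseteq> zp X" "F \<subseteq> zp Y1" "F \<subseteq> zp Y2" "card F = d - 1"
  and n1: "zp X \<noteq> zp Y1" and n2: "zp X \<noteq> zp Y2" and n3: "zp Y1 \<noteq> zp Y2"
  shows False
proof -
  have XC: "X \<in> C" and Y1C: "Y1 \<in> C" and Y2C: "Y2 \<in> C" using X Y1 Y2 by (auto simp: vert_def)
  obtain f where f: "f \<notin> F" "zp X = insert f F" using ins_form[OF XC F(1,4)] by blast
  obtain g1 where g1: "g1 \<notin> F" "zp Y1 = insert g1 F" using ins_form[OF Y1C F(2,4)] by blast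
  obtain g2 where g2: "g2 \<notin> F" "zp Y2 = insert g2 F" using ins_form[OF Y2C F(3,4)] by blast
  have fR: "f \<in> R" using vert_R[OF X] f by auto
  have g1R: "g1 \<in> R" using vert_R[OF Y1] g1 by auto
  have g2R: "g2 \<in> R" using vert_R[OF Y2] g2 by auto
  have g2X: "g2 \<notin> zp X" using f g2 n2 by auto
  have g2Y1: "g2 \<notin> zp Y1" using g1 g2 n3 by auto
  have fY1: "f \<notin> zp Y1" using f g1 n1 by auto
  have fY2: "f \<notin> zp Y2" using f g2 n2 by auto
  have g1Y2: "g1 \<notin> zp Y2" using g1 g2 n3 by auto
  have g1X: "g1 \<notin> zp X" using f g1 n1 by auto
  have Xg2: "X g2 = T g2" by (rule vert_conf[OF X g2R g2X R])
  have Y1g2: "Y1 g2 = T g2" by (rule vert_conf[OF Y1 g2R g2Y1 R])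
  have Tg2: "T g2 \<noteq> Zero" by (rule TnzR[OF R g2R])
  have Tf: "T f \<noteq> Zero" by (rule TnzR[OF R fR])
  have Tg1: "T g1 \<noteq> Zero" by (rule TnzR[OF R g1R])
  have "g2 \<in> sep X (negv Y1)" using Xg2 Y1g2 Tg2 by (simp add: sep_iff)
  moreover have "X \<noteq> negv (negv Y1)" using n1 by auto
  ultimately obtain W where W: "W \<in> C" "W g2 = Zero" "\<forall>x. W x = Zero \<or> W x = X x \<or> W x = negv Y1 x"
    using C_elim[OF XC C_neg[OF Y1C]] by blast
  have g2E: "g2 \<in> E" using g2R R by auto
  have "insert g2 F \<subseteq> zp W"
  proof
    fix x assume x: "x \<in> insert g2 F"
    show "x \<in> zp W"
    proof (cases "x = g2")
      case True then show ?thesis using W(2) g2E by (simp add: zp_iff)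
    next
      case False
      then have xF: "x \<in> F" using x by simp
      then have "X x = Zero" "Y1 x = Zero" "x \<in> E" using F(1,2) by (auto simp: zp_iff)
      then show ?thesis using W(3) by (auto simp: zp_iff)
    qed
  qed
  then have "zp Y2 \<subseteq> zp W" using g2 by simp
  then have zW: "zp Y2 = zp W" using zp_sub_card[OF W(1)] card_zp[OF Y2C] by metis
  then have WY2: "W = Y2 \<or> W = negv Y2" using zp_eq_C[OF W(1) Y2C] by metis
  have fE: "f \<in> E" using fR R by auto
  have g1E: "g1 \<in> E" using g1R R by auto
  have "W f \<noteq> Zero" using fY2 zW fE by (simp add: zp_iff)
  moreover have "X f = Zero" using f fE by (auto simp: zp_iff)
  moreover have "Y1 f = T f" by (rule vert_conf[OF Y1 fR fY1 R])
  ultimately have Wf: "W f = sneg (T f)" using W(3) by (metis negv_app)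
  have "W g1 \<noteq> Zero" using g1Y2 zW g1E by (simp add: zp_iff)
  moreover have "Y1 g1 = Zero" using g1 g1E by (auto simp: zp_iff)
  moreover have "X g1 = T g1" by (rule vert_conf[OF X g1R g1X R])
  ultimately have Wg1: "W g1 = T g1" using W(3) by (metis negv_app sneg.simps(3))
  have Y2f: "Y2 f = T f" by (rule vert_conf[OF Y2 fR fY2 R])
  have Y2g1: "Y2 g1 = T g1" by (rule vert_conf[OF Y2 g1R g1Y2 R])
  show False
  proof (cases "W = Y2")
    case True
    then have "T f = sneg (T f)" using Wf Y2f by simp
    then show False using sneg_neq Tf by metis
  next
    case False
    then have "W = negv Y2" using WY2 by simp
    then have "T g1 = sneg (T g1)" using Wg1 Y2g1 by simp
    then show False using sneg_neq Tg1 by metis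
  qed
qed

definition adjv :: "'e set \<Rightarrow> 'e set \<Rightarrow> 'e svec \<Rightarrow> 'e svec \<Rightarrow> bool" where
 "adjv R S X Y \<longleftrightarrow> vert R X \<and> vert R Y \<and> S \<subseteq> zp X \<and> S \<subseteq> zp Y \<and> zp X \<noteq> zp Y
    \<and> card (zp X \<inter> zp Y) = d - 1"

lemma adjv_sym: "adjv R S X Y \<Longrightarrow> adjv R S Y X"
  by (auto simp: adjv_def Int_commute)

lemma adjv_mono: "adjv R S' X Y \<Longrightarrow> S \<subseteq> S' \<Longrightarrow> adjv R S X Y"
  by (auto simp: adjv_def)

lemma reach_mono: "(adjv R S')\<^sup>*\<^sup>* X Y \<Longrightarrow> S \<subseteq> S' \<Longrightarrow> (adjv R S)\<^sup>*\<^sup>* X Y"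
proof (induction rule: rtranclp_induct)
  case base then show ?case by simp
next
  case (step y z)
  then show ?case using adjv_mono[of R S' y z S] by (meson rtranclp.rtrancl_into_rtrancl)
qed

lemma vert_sub: "vert R X \<Longrightarrow> zp X \<subseteq> R' \<Longrightarrow> R' \<subseteq> R \<Longrightarrow> vert R' X"
  by (auto simp: vert_def)

lemma vert_good: "vert (R - {e}) W \<Longrightarrow> W e = T e \<Longrightarrow> vert R W"
  by (auto simp: vert_def)

lemma ELIM: assumes R: "R \<subseteq> E" "e \<in> R" and P: "vert R P" and eP: "e \<notin> zp P"
  and B: "vert (R - {e}) B" and Be: "B e \<noteq> T e" and ne: "zp P \<noteq> zp B"
  and c: "card (zp P \<inter> zp B) = d - 1"
  shows "\<exists>N. vert R N \<and> zp N = insert e (zp P \<inter> zp B)"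
proof -
  have PC: "P \<in> C" and BC: "B \<in> C" using P B by (auto simp: vert_def)
  have eE: "e \<in> E" using R by auto
  have "e \<notin> zp B" using vert_R[OF B] by auto
  then have B0: "B e \<noteq> Zero" using eE by (simp add: zp_iff)
  have Pe: "P e = T e" by (rule vert_conf[OF P R(2) eP R(1)])
  have Te: "T e \<noteq> Zero" by (rule T_full[OF eE])
  have "B e = sneg (P e)" using sign3[OF Te B0] Be Pe by metis
  then have "e \<in> sep P B" using Pe Te by (simp add: sep_iff)
  moreover have "P \<noteq> negv B" using ne by auto
  ultimately obtain W where W: "W \<in> C" "W e = Zero" "\<forall>x. W x = Zero \<or> W x = P x \<or> W x = B x"
    using C_elim[OF PC BC] by blast
  have sub: "insert e (zp P \<inter> zp B) \<subseteq> zp W"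
  proof
    fix x assume x: "x \<in> insert e (zp P \<inter> zp B)"
    show "x \<in> zp W"
    proof (cases "x = e")
      case True then show ?thesis using W(2) eE by (simp add: zp_iff)
    next
      case False
      then have "P x = Zero" "B x = Zero" "x \<in> E" using x by (auto simp: zp_iff)
      then show ?thesis using W(3) by (auto simp: zp_iff)
    qed
  qed
  have fin: "finite (zp P \<inter> zp B)" using fin_zp by simp
  have "card (insert e (zp P \<inter> zp B)) = d" using c eP fin d_pos by simp
  then have zW: "zp W = insert e (zp P \<inter> zp B)" using zp_sub_card[OF W(1) sub] by simp
  have "vert R W" unfolding vert_def
  proof (intro conjI ballI)
    show "W \<in> C" by (rule W(1))
    show "zp W \<subseteq> R" using zW vert_R[OF P] R(2) by auto
    fix x assume xR: "x \<in> R"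
    show "W x = Zero \<or> W x = T x"
    proof (cases "W x = Zero")
      case True then show ?thesis by simp
    next
      case False
      have xE: "x \<in> E" using xR R by auto
      have xe: "x \<noteq> e" using False W(2) by auto
      show ?thesis
      proof (cases "W x = P x")
        case True
        then have "x \<notin> zp P" using False xE by (simp add: zp_iff)
        then show ?thesis using vert_conf[OF P xR _ R(1)] True by simp
      next
        case False2: False
        then have WB: "W x = B x" using W(3) False by metis
        then have "x \<notin> zp B" using False xE by (simp add: zp_iff)
        moreover have "x \<in> R - {e}" using xR xe by simp
        moreover have "R - {e} \<subseteq> E" using R by auto
        ultimately show ?thesis using vert_conf[OF B] WB by simp
      qed
    qed
  qed
  then show ?thesis using zW by blast
qed

end


context UOM begin

lemma ELIM_adj: assumes R: "R \<subseteq> E" "e \<in> R" and P: "vert R P" "P e = T e"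
  and B: "vert (R - {e}) B" "B e \<noteq> T e" and adj: "adjv (R - {e}) S P B"
  shows "\<exists>N. adjv R S P N \<and> insert e S \<subseteq> zp N"
proof -
  have eP: "e \<notin> zp P" using adj vert_R by (auto simp: adjv_def)
  have ne: "zp P \<noteq> zp B" and c: "card (zp P \<inter> zp B) = d - 1" and SP: "S \<subseteq> zp P" and SB: "S \<subseteq> zp B"
    using adj by (auto simp: adjv_def)
  obtain N where N: "vert R N" "zp N = insert e (zp P \<inter> zp B)"
    using ELIM[OF R P(1) eP B ne c] by blast
  have "zp P \<inter> zp N = zp P \<inter> zp B" using N(2) eP by auto
  then have "adjv R S P N" unfolding adjv_def using P(1) N SP SB c eP by auto
  moreover have "insert e S \<subseteq> zp N" using N(2) SP SB by auto
  ultimately show ?thesis by blast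
qed

lemma surgery:
  assumes R: "R \<subseteq> E" "e \<in> R" and X: "vert R X" "e \<notin> zp X"
  and IHe: "\<And>N N'. vert R N \<Longrightarrow> vert R N' \<Longrightarrow> insert e S \<subseteq> zp N \<Longrightarrow> insert e S \<subseteq> zp N'
             \<Longrightarrow> (adjv R S)\<^sup>*\<^sup>* N N'"
  and path: "(adjv (R - {e}) S)\<^sup>*\<^sup>* X W"
  shows "(W e = T e \<longrightarrow> (adjv R S)\<^sup>*\<^sup>* X W) \<and>
         (W e \<noteq> T e \<longrightarrow> (\<exists>N. vert R N \<and> insert e S \<subseteq> zp N \<and> (adjv R S)\<^sup>*\<^sup>* X N))"
  using path
proof (induction rule: rtranclp_induct)
  case base
  show ?case using vert_conf[OF X(1) R(2) X(2) R(1)] by simp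
next
  case (step W W')
  have adj: "adjv (R - {e}) S W W'" by fact
  have vW: "vert (R - {e}) W" and vW': "vert (R - {e}) W'" using adj by (auto simp: adjv_def)
  show ?case
  proof (cases "W e = T e")
    case Wg: True
    have reachW: "(adjv R S)\<^sup>*\<^sup>* X W" using step.IH Wg by simp
    have vRW: "vert R W" by (rule vert_good[OF vW Wg])
    show ?thesis
    proof (cases "W' e = T e")
      case True
      have "vert R W'" by (rule vert_good[OF vW' True])
      then have "adjv R S W W'" using adj vRW by (auto simp: adjv_def)
      then have "(adjv R S)\<^sup>*\<^sup>* X W'" using reachW by (meson rtranclp.rtrancl_into_rtrancl)
      then show ?thesis using True by simp
    next
      case False
      obtain N where N: "adjv R S W N" "insert e S \<subseteq> zp N"
        using ELIM_adj[OF R vRW Wg vW' False adj] by blast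
      have "(adjv R S)\<^sup>*\<^sup>* X N" using reachW N(1) by (meson rtranclp.rtrancl_into_rtrancl)
      moreover have "vert R N" using N(1) by (simp add: adjv_def)
      ultimately show ?thesis using False N(2) by blast
    qed
  next
    case Wb: False
    obtain N where N: "vert R N" "insert e S \<subseteq> zp N" "(adjv R S)\<^sup>*\<^sup>* X N" using step.IH Wb by blast
    show ?thesis
    proof (cases "W' e = T e")
      case True
      have vRW': "vert R W'" by (rule vert_good[OF vW' True])
      obtain N' where N': "adjv R S W' N'" "insert e S \<subseteq> zp N'"
        using ELIM_adj[OF R vRW' True vW Wb adjv_sym[OF adj]] by blast
      have vN': "vert R N'" using N'(1) by (simp add: adjv_def)
      have "(adjv R S)\<^sup>*\<^sup>* N N'" by (rule IHe[OF N(1) vN' N(2) N'(2)])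
      then have "(adjv R S)\<^sup>*\<^sup>* X N'" using N(3) by (rule rtranclp_trans[rotated])
      then have "(adjv R S)\<^sup>*\<^sup>* X W'" using adjv_sym[OF N'(1)] by (meson rtranclp.rtrancl_into_rtrancl)
      then show ?thesis using True by simp
    next
      case False
      then show ?thesis using N by blast
    qed
  qed
qed

lemma card_lt_d: "X \<in> C \<Longrightarrow> Y \<in> C \<Longrightarrow> zp X \<noteq> zp Y \<Longrightarrow> \<exists>h. h \<in> zp X \<and> h \<notin> zp Y"
  using zp_sub_card card_zp by (metis subsetI)

lemma conn_aux: "\<forall>R S X Y. card R + (d - card S) = n \<longrightarrow> R \<subseteq> E \<longrightarrow> vert R X \<longrightarrow> vert R Y
   \<longrightarrow> S \<subseteq> zp X \<longrightarrow> S \<subseteq> zp Y \<longrightarrow> zp X \<noteq> zp Y \<longrightarrow> (adjv R S)\<^sup>*\<^sup>* X Y"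
proof (induction n rule: less_induct)
  case (less n)
  show ?case
  proof (intro allI impI)
    fix R S X Y
    assume n: "card R + (d - card S) = n" and R: "R \<subseteq> E" and X: "vert R X" and Y: "vert R Y"
      and SX: "S \<subseteq> zp X" and SY: "S \<subseteq> zp Y" and ne: "zp X \<noteq> zp Y"
    have XC: "X \<in> C" and YC: "Y \<in> C" using X Y by (auto simp: vert_def)
    have finR: "finite R" by (rule finite_subset[OF R finE])
    have cS: "card S \<le> d" using card_mono[OF fin_zp SX] card_zp[OF XC] by simp
    show "(adjv R S)\<^sup>*\<^sup>* X Y"
    proof (cases "\<exists>e\<in>R. e \<notin> zp X \<and> e \<notin> zp Y")
      case True
      then obtain e where e: "e \<in> R" "e \<notin> zp X" "e \<notin> zp Y" by blast
      define R' where "R' = R - {e}"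
      have R'R: "R' \<subseteq> R" unfolding R'_def by auto
      have vX': "vert R' X" by (rule vert_sub[OF X _ R'R]) (use vert_R[OF X] e in \<open>auto simp: R'_def\<close>)
      have vY': "vert R' Y" by (rule vert_sub[OF Y _ R'R]) (use vert_R[OF Y] e in \<open>auto simp: R'_def\<close>)
      have "card R' < card R" unfolding R'_def by (rule card_Diff1_less[OF finR e(1)])
      then have lt1: "card R' + (d - card S) < n" using n by simp
      have R'E: "R' \<subseteq> E" using R R'R by auto
      have P1: "(adjv R' S)\<^sup>*\<^sup>* X Y"
        using less.IH[OF lt1, rule_format, OF refl R'E vX' vY' SX SY ne] .
      have eS: "e \<notin> S" using SX e(2) by auto
      have IHe: "(adjv R S)\<^sup>*\<^sup>* N N'" if N: "vert R N" "vert R N'" "insert e S \<subseteq> zp N" "insert e S \<subseteq> zp N'" for N N'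
      proof (cases "zp N = zp N'")
        case True
        have "\<not> zp X \<subseteq> zp N"
        proof
          assume "zp X \<subseteq> zp N"
          then have "zp X = zp N" using zp_sub_card[OF vert_C[OF N(1)]] card_zp[OF XC] by metis
          then show False using N(3) e(2) by auto
        qed
        then obtain x where x: "x \<in> zp X" "x \<notin> zp N" by blast
        have "x \<in> R" using x(1) vert_R[OF X] by auto
        then have "N = N'" using vert_unique[OF R N(1) N(2) True] x(2) by simp
        then show ?thesis by simp
      next
        case False
        have "card (insert e S) = Suc (card S)" using eS finite_subset[OF SX fin_zp] by simp
        moreover have "card (insert e S) \<le> d" using card_mono[OF fin_zp N(3)] card_zp[OF vert_C[OF N(1)]] by simp
        ultimately have "card R + (d - card (insert e S)) < n" using n by simp
        then have "(adjv R (insert e S))\<^sup>*\<^sup>* N N'"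
          using less.IH[rule_format, OF _ refl R N(1) N(2) N(3) N(4) False] by blast
        then show ?thesis by (rule reach_mono) auto
      qed
      have Ye: "Y e = T e" by (rule vert_conf[OF Y e(1) e(3) R])
      show ?thesis using surgery[OF R e(1) X e(2) IHe P1[unfolded R'_def]] Ye by simp
    next
      case False
      then have Rsub: "R \<subseteq> zp X \<union> zp Y" by blast
      obtain h where h: "h \<in> zp X" "h \<notin> zp Y" using card_lt_d[OF XC YC ne] by blast
      obtain g where g: "g \<in> zp Y" "g \<notin> zp X" using card_lt_d[OF YC XC] ne by metis
      define F where "F = zp X - {h}"
      have FX: "F \<subseteq> zp X" unfolding F_def by auto
      have cF: "card F = d - 1" unfolding F_def using h(1) card_zp[OF XC] by (simp add: card_Diff_singleton)
      have SF: "S \<subseteq> F" unfolding F_def using SX SY h(2) by auto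
      have gR: "g \<in> R" using g(1) vert_R[OF Y] by auto
      obtain X' where X': "vert R X'" "F \<subseteq> zp X'" "zp X' \<noteq> zp X" using EX[OF R X FX cF gR g(2)] by blast
      have X'C: "X' \<in> C" using X'(1) by (simp add: vert_def)
      have "\<not> zp X \<subseteq> zp X'"
      proof
        assume "zp X \<subseteq> zp X'"
        then have "zp X = zp X'" using zp_sub_card[OF X'C] card_zp[OF XC] by metis
        then show False using X'(3) by simp
      qed
      then have "zp X \<inter> zp X' \<subset> zp X" by auto
      then have "card (zp X \<inter> zp X') < d" using psubset_card_mono[OF fin_zp] card_zp[OF XC] by metis
      moreover have "F \<subseteq> zp X \<inter> zp X'" using FX X'(2) by auto
      then have "d - 1 \<le> card (zp X \<inter> zp X')" using card_mono[of "zp X \<inter> zp X'" F] fin_zp cF by simp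
      ultimately have cXX': "card (zp X \<inter> zp X') = d - 1" by simp
      have adj1: "adjv R S X X'" unfolding adjv_def using X X'(1) SX SF X'(2) X'(3) cXX' by auto
      obtain g' where g': "g' \<in> zp X'" "g' \<notin> zp X" using card_lt_d[OF X'C XC] X'(3) by metis
      have g'Y: "g' \<in> zp Y" using g' vert_R[OF X'(1)] Rsub by auto
      define S' where "S' = zp X' \<inter> zp Y"
      have SS': "S \<subseteq> S'" unfolding S'_def using SF X'(2) SY by auto
      have "g' \<in> S'" "g' \<notin> S" unfolding S'_def using g' g'Y SX by auto
      then have "S \<subset> S'" using SS' by auto
      then have "card S < card S'" using psubset_card_mono[of S' S] fin_zp unfolding S'_def by auto
      moreover have "card S' \<le> d" unfolding S'_def using card_mono[OF fin_zp, of "zp X' \<inter> zp Y" Y] card_zp[OF YC] by simp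
      ultimately have lt2: "card R + (d - card S') < n" using n by simp
      show ?thesis
      proof (cases "zp X' = zp Y")
        case True
        have hR: "h \<in> R" using h(1) vert_R[OF X] by auto
        have "X' = Y" using vert_unique[OF R X'(1) Y True hR] h(2) True by simp
        then show ?thesis using adj1 by simp
      next
        case False
        have "(adjv R S')\<^sup>*\<^sup>* X' Y"
          using less.IH[OF lt2, rule_format, OF refl R X'(1) Y _ _ False] unfolding S'_def by auto
        then have "(adjv R S)\<^sup>*\<^sup>* X' Y" using SS' by (rule reach_mono)
        then show ?thesis using adj1 by (meson converse_rtranclp_into_rtranclp)
      qed
    qed
  qed
qed

lemma conn: "R \<subseteq> E \<Longrightarrow> vert R X \<Longrightarrow> vert R Y \<Longrightarrow> S \<subseteq> zp X \<Longrightarrow> S \<subseteq> zp Y \<Longrightarrow> zp X \<noteq> zp Y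
   \<Longrightarrow> (adjv R S)\<^sup>*\<^sup>* X Y"
  using conn_aux by blast

end



lemma rtranclp_seq: "r\<^sup>*\<^sup>* a b \<Longrightarrow> \<exists>(f :: nat \<Rightarrow> 'a) k. f 0 = a \<and> f k = b \<and> (\<forall>i<k. r (f i) (f (Suc i)))"
proof (induction rule: rtranclp_induct)
  case base
  show ?case by (rule exI[of _ "\<lambda>_. a"], rule exI[of _ 0]) simp
next
  case (step b c)
  then obtain f k where f: "f 0 = a" "f k = b" "\<forall>i<k. r (f i) (f (Suc i))" by blast
  define g where "g = f(Suc k := c)"
  have "g 0 = a" using f(1) by (simp add: g_def)
  moreover have "g (Suc k) = c" by (simp add: g_def)
  moreover have "\<forall>i<Suc k. r (g i) (g (Suc i))"
  proof (intro allI impI)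
    fix i assume i: "i < Suc k"
    show "r (g i) (g (Suc i))"
    proof (cases "i = k")
      case True then show ?thesis using step(2) f(2) by (simp add: g_def)
    next
      case False then have "i < k" using i by simp
      then show ?thesis using f(3) by (simp add: g_def)
    qed
  qed
  ultimately show ?case by blast
qed

context UOM begin

lemma tc_vert: "X \<in> tope_cocircuits C T \<longleftrightarrow> vert E X"
proof
  assume X: "X \<in> tope_cocircuits C T"
  then have XC: "X \<in> C" and sl: "sless X T" by (auto simp: tope_cocircuits_def)
  then show "vert E X" unfolding vert_def using zp_subset[of E X] by (auto simp: sless_def sle_def)
next
  assume v: "vert E X"
  then have XC: "X \<in> C" by (simp add: vert_def)
  have "sle X T" unfolding sle_def
  proof
    fix x show "X x = Zero \<or> X x = T x"
    proof (cases "x \<in> E")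
      case True then show ?thesis using v by (simp add: vert_def)
    next
      case False then show ?thesis using sv_out[OF C_sv[OF XC]] by simp
    qed
  qed
  moreover have "X \<noteq> T"
  proof
    assume XT: "X = T"
    have "zp X \<noteq> {}" using card_zp[OF XC] d_pos by auto
    then obtain x where "x \<in> zp X" by blast
    then have "x \<in> E" "X x = Zero" by (auto simp: zp_iff)
    then show False using T_full XT by simp
  qed
  ultimately show "X \<in> tope_cocircuits C T" using XC by (simp add: tope_cocircuits_def sless_def)
qed

lemma out_elem: assumes "X \<in> C" shows "\<exists>x\<in>E. x \<notin> zp X"
proof (rule ccontr)
  assume "\<not> (\<exists>x\<in>E. x \<notin> zp X)"
  then have "E \<subseteq> zp X" by auto
  then have "card E \<le> card (zp X)" using card_mono fin_zp by metis
  then show False using card_zp[OF assms] E_big by simp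
qed

lemma inj_tc: "inj_on zp (tope_cocircuits C T)"
proof (rule inj_onI)
  fix X Y assume X: "X \<in> tope_cocircuits C T" and Y: "Y \<in> tope_cocircuits C T" and eq: "zp X = zp Y"
  have vX: "vert E X" and vY: "vert E Y" using X Y tc_vert by auto
  obtain x where "x \<in> E" "x \<notin> zp X" using out_elem vert_C[OF vX] by blast
  then show "X = Y" using vert_unique[OF order_refl vX vY eq] by simp
qed

abbreviation "AA \<equiv> zp ` tope_cocircuits C T"

lemma part_ii: assumes F: "F \<subseteq> E" "card F = d - 1"
  shows "card {V\<in>AA. F \<subseteq> V} = 0 \<or> card {V\<in>AA. F \<subseteq> V} = 2"
proof (cases "{V\<in>AA. F \<subseteq> V} = {}")
  case True
  have "card {V\<in>AA. F \<subseteq> V} = 0" unfolding True by (rule card.empty)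
  then show ?thesis by (rule disjI1)
next
  case False
  then obtain X where X: "X \<in> tope_cocircuits C T" "F \<subseteq> zp X" by blast
  have vX: "vert E X" using X(1) tc_vert by simp
  obtain g where g: "g \<in> E" "g \<notin> zp X" using out_elem vert_C[OF vX] by blast
  obtain Y where Y: "vert E Y" "F \<subseteq> zp Y" "zp Y \<noteq> zp X" using EX[OF order_refl vX X(2) F(2) g] by blast
  have "{V\<in>AA. F \<subseteq> V} = {zp X, zp Y}"
  proof
    show "{zp X, zp Y} \<subseteq> {V\<in>AA. F \<subseteq> V}" using X Y tc_vert by auto
    show "{V\<in>AA. F \<subseteq> V} \<subseteq> {zp X, zp Y}"
    proof
      fix V assume "V \<in> {V\<in>AA. F \<subseteq> V}"
      then obtain W where W: "W \<in> tope_cocircuits C T" "V = zp W" "F \<subseteq> zp W" by blast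
      have vW: "vert E W" using W(1) tc_vert by simp
      show "V \<in> {zp X, zp Y}"
      proof (rule ccontr)
        assume "V \<notin> {zp X, zp Y}"
        then have "zp X \<noteq> zp W" "zp Y \<noteq> zp W" using W(2) by auto
        then show False using UQ[OF order_refl vX Y(1) vW X(2) Y(2) W(3) F(2)] Y(3) by metis
      qed
    qed
  qed
  then show ?thesis using Y(3) by simp
qed

lemma part_iii: assumes V: "V \<in> AA" and W: "W \<in> AA" and ne: "V \<noteq> W"
  shows "\<exists>(Z :: nat \<Rightarrow> 'e set) k. Z 0 = V \<and> Z k = W
             \<and> (\<forall>i\<le>k. Z i \<in> AA \<and> V \<inter> W \<subseteq> Z i)
             \<and> (\<forall>i<k. abs_adj E AA d (Z i) (Z (Suc i)))"
proof -
  obtain X where X: "X \<in> tope_cocircuits C T" "V = zp X" using V by blast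
  obtain Y where Y: "Y \<in> tope_cocircuits C T" "W = zp Y" using W by blast
  have vX: "vert E X" and vY: "vert E Y" using X Y tc_vert by auto
  let ?S = "zp X \<inter> zp Y"
  have "(adjv E ?S)\<^sup>*\<^sup>* X Y" by (rule conn[OF order_refl vX vY]) (use ne X Y in auto)
  then obtain f k where f: "f 0 = X" "f k = Y" "\<forall>i<k. adjv E ?S (f i) (f (Suc i))"
    using rtranclp_seq by metis
  have vi: "vert E (f i) \<and> ?S \<subseteq> zp (f i)" if "i \<le> k" for i
  proof (cases "i = k")
    case True then show ?thesis using f(2) vY by auto
  next
    case False then have "i < k" using that by simp
    then show ?thesis using f(3) by (auto simp: adjv_def)
  qed
  define Z where "Z i = zp (f i)" for i
  have "Z 0 = V" "Z k = W" using f X Y by (auto simp: Z_def)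
  moreover have "\<forall>i\<le>k. Z i \<in> AA \<and> V \<inter> W \<subseteq> Z i"
  proof (intro allI impI)
    fix i assume "i \<le> k"
    then have "vert E (f i)" "?S \<subseteq> zp (f i)" using vi by auto
    then show "Z i \<in> AA \<and> V \<inter> W \<subseteq> Z i" using X Y tc_vert by (auto simp: Z_def)
  qed
  moreover have "\<forall>i<k. abs_adj E AA d (Z i) (Z (Suc i))"
  proof (intro allI impI)
    fix i assume i: "i < k"
    then have a: "adjv E ?S (f i) (f (Suc i))" using f(3) by simp
    then have v1: "vert E (f i)" and v2: "vert E (f (Suc i))" and nz: "zp (f i) \<noteq> zp (f (Suc i))"
      and c: "card (zp (f i) \<inter> zp (f (Suc i))) = d - 1" by (auto simp: adjv_def)
    have "zp (f i) \<inter> zp (f (Suc i)) \<subseteq> E" using zp_subset[of E "f i"] by auto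
    then show "abs_adj E AA d (Z i) (Z (Suc i))" unfolding abs_adj_def Z_def
      using v1 v2 nz c tc_vert by auto
  qed
  ultimately show ?thesis by blast
qed

lemma part_adj: assumes X: "X \<in> tope_cocircuits C T" and Y: "Y \<in> tope_cocircuits C T"
  shows "cocirc_adj E C X Y \<longleftrightarrow> abs_adj E AA (om_rank C - 1) (zp X) (zp Y)"
proof -
  have vX: "vert E X" and vY: "vert E Y" using X Y tc_vert by auto
  have XC: "X \<in> C" and YC: "Y \<in> C" using vX vY by (auto simp: vert_def)
  have eqv: "X = Y \<longleftrightarrow> zp X = zp Y" using inj_tc X Y by (auto simp: inj_on_def)
  have r2: "om_rank C - 2 = d - 1" by simp
  have sep0: "sep X Y = {}"
  proof (rule ccontr)
    assume "sep X Y \<noteq> {}"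
    then obtain x where x: "x \<in> sep X Y" by blast
    then have Xx: "X x \<noteq> Zero" and Yx: "Y x = sneg (X x)" by (auto simp: sep_iff)
    have xE: "x \<in> E" using sv_nz[OF C_sv[OF XC] Xx] .
    have "x \<notin> zp X" using Xx by (simp add: zp_iff)
    then have "X x = T x" by (rule vert_conf[OF vX xE _ order_refl])
    moreover have "Y x \<noteq> Zero" using Yx Xx by simp
    then have "x \<notin> zp Y" by (simp add: zp_iff)
    then have "Y x = T x" by (rule vert_conf[OF vY xE _ order_refl])
    ultimately show False using Yx Xx sneg_neq by metis
  qed
  have finI: "finite (zp X \<inter> zp Y)" using fin_zp by simp
  have cf: "(d - 1 \<le> card (zp X \<inter> zp Y)) \<longleftrightarrow> (\<exists>F. F \<subseteq> E \<and> card F = d - 1 \<and> F \<subseteq> zp X \<and> F \<subseteq> zp Y)"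
  proof
    assume "d - 1 \<le> card (zp X \<inter> zp Y)"
    then obtain F where "F \<subseteq> zp X \<inter> zp Y" "card F = d - 1" by (meson obtain_subset_with_card_n)
    then show "\<exists>F. F \<subseteq> E \<and> card F = d - 1 \<and> F \<subseteq> zp X \<and> F \<subseteq> zp Y" using zp_subset[of E X] by auto
  next
    assume "\<exists>F. F \<subseteq> E \<and> card F = d - 1 \<and> F \<subseteq> zp X \<and> F \<subseteq> zp Y"
    then obtain F where F: "card F = d - 1" "F \<subseteq> zp X \<inter> zp Y" by auto
    then show "d - 1 \<le> card (zp X \<inter> zp Y)" using card_mono[OF finI F(2)] by simp
  qed
  have inA: "zp X \<in> AA" "zp Y \<in> AA" using X Y by auto
  show ?thesis unfolding cocirc_adj_def abs_adj_def r2 cf[symmetric] using XC YC sep0 eqv inA by simp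
qed

lemma main:
  "abstract_polytope E (zero_part E ` tope_cocircuits C T) (om_rank C - 1)
    \<and> bij_betw (zero_part E) (tope_cocircuits C T) (zero_part E ` tope_cocircuits C T)
    \<and> (\<forall>X\<in>tope_cocircuits C T. \<forall>Y\<in>tope_cocircuits C T.
          cocirc_adj E C X Y \<longleftrightarrow>
          abs_adj E (zero_part E ` tope_cocircuits C T) (om_rank C - 1)
                  (zero_part E X) (zero_part E Y))"
proof (intro conjI)
  show "abstract_polytope E AA (om_rank C - 1)"
    unfolding abstract_polytope_def
  proof (intro conjI)
    show "finite E" by (rule finE)
    show "AA \<subseteq> Pow E"
    proof
      fix V assume "V \<in> AA"
      then obtain X where "V = zp X" by blast
      then show "V \<in> Pow E" using zp_subset[of E X] by simp
    qed
    show "\<forall>V\<in>AA. card V = om_rank C - 1" using card_zp by (auto simp: tope_cocircuits_def)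
    show "\<forall>F. F \<subseteq> E \<and> card F = om_rank C - 1 - 1 \<longrightarrow>
          card {V\<in>AA. F \<subseteq> V} = 0 \<or> card {V\<in>AA. F \<subseteq> V} = 2"
      by (intro allI impI, elim conjE) (rule part_ii)
    show "\<forall>X\<in>AA. \<forall>Y\<in>AA. X \<noteq> Y \<longrightarrow>
          (\<exists>(Z :: nat \<Rightarrow> 'e set) k. Z 0 = X \<and> Z k = Y
             \<and> (\<forall>i\<le>k. Z i \<in> AA \<and> X \<inter> Y \<subseteq> Z i)
             \<and> (\<forall>i<k. abs_adj E AA (om_rank C - 1) (Z i) (Z (Suc i))))"
      by (intro ballI impI) (rule part_iii)
  qed
  show "bij_betw zp (tope_cocircuits C T) AA" using inj_tc by (simp add: bij_betw_def)
  show "\<forall>X\<in>tope_cocircuits C T. \<forall>Y\<in>tope_cocircuits C T.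
          cocirc_adj E C X Y \<longleftrightarrow> abs_adj E AA (om_rank C - 1) (zp X) (zp Y)"
    by (intro ballI) (rule part_adj)
qed

end

theorem lemma2p4:
  fixes E :: "'e set" and C :: "'e svec set" and T :: "'e svec"
  assumes "oriented_matroid E C"
    and "uniform_om E C"
    and "om_rank C \<ge> 2"
    and "is_tope C T"
  shows "abstract_polytope E (zero_part E ` tope_cocircuits C T) (om_rank C - 1)
    \<and> bij_betw (zero_part E) (tope_cocircuits C T) (zero_part E ` tope_cocircuits C T)
    \<and> (\<forall>X\<in>tope_cocircuits C T. \<forall>Y\<in>tope_cocircuits C T.
          cocirc_adj E C X Y \<longleftrightarrow>
          abs_adj E (zero_part E ` tope_cocircuits C T) (om_rank C - 1)
                  (zero_part E X) (zero_part E Y))"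
proof -
  interpret UOM E C T using assms by unfold_locales
  show ?thesis by (rule main)
qed


end
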